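(* Let $T\in\mathcal{C}_{P,t}$. If $F_T(x)$ is not the Laurent expansion at $x=\infty$ of a rational function, then, viewed as a power series in $w=x^{-1}$, $F_T$ has radius of convergence $0$.
   Context: $P\in\mathbb{C}[x]$ is a nonconstant monic polynomial, $t\in\mathbb{C}\setminus\{0\}$. $\mathcal{A}_P$ denotes the associative unital $\mathbb{C}$-algebra generated by $u,v,z$ subject to $zu-uz=u$, $zv-vz=-v$, $uv=P(z-\tfrac12)$, $vu=P(z+\tfrac12)$; $g_t$ is the automorphism with $g_t(u)=t^{-1}u$, $g_t(v)=tv$, $g_t(z)=z$; $\mathcal{C}_{P,t}$ is the space of linear $T:\mathcal{A}_P\to\mathbb{C}$ with $T(ab)=T(g_t(b)a)$ for all $a,b$. The formal Stieltjes transform of $T$ is $F_T(x)=\sum_{n\ge0}T(z^n)x^{-n-1}$. *)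

theory Defs
  imports "HOL-Analysis.Analysis" "HOL-Library.Poly_Mapping"
    "HOL-Computational_Algebra.Polynomial" "HOL-Computational_Algebra.Formal_Laurent_Series"
begin

instantiation list :: (type) monoid_add
begin
definition zero_list_def: "(0 :: 'a list) = []"
definition plus_list_def: "(xs :: 'a list) + ys = xs @ ys"
instance by standard (auto simp: zero_list_def plus_list_def)
end

datatype gen = U | V | Z

text \<open>The free associative unital C-algebra on u, v, z: finitely supported
  functions from words to complex coefficients, with convolution product.\<close>
type_synonym fa = "gen list \<Rightarrow>\<^sub>0 complex"

definition gU :: fa where "gU = Poly_Mapping.single [U] 1"
definition gV :: fa where "gV = Poly_Mapping.single [V] 1"
definition gZ :: fa where "gZ = Poly_Mapping.single [Z] 1"

definition scal :: "complex \<Rightarrow> fa \<Rightarrow> fa" where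
  "scal c p = Poly_Mapping.single [] c * p"

definition poly_z :: "complex poly \<Rightarrow> fa" where
  "poly_z q = (\<Sum>i\<le>Polynomial.degree q. scal (coeff q i) (gZ ^ i))"

text \<open>Defining relations of A_P (each is set to 0 in A_P).\<close>
definition rels :: "complex poly \<Rightarrow> fa set" where
  "rels P = { gZ * gU - gU * gZ - gU,
              gZ * gV - gV * gZ + gV,
              gU * gV - poly_z (pcompose P [:-1/2, 1:]),
              gV * gU - poly_z (pcompose P [:1/2, 1:]) }"

text \<open>Linear functionals on A_P = linear functionals on the free algebra
  vanishing on the two-sided ideal generated by the relations.\<close>
definition AP_functional :: "complex poly \<Rightarrow> (fa \<Rightarrow> complex) \<Rightarrow> bool" where
  "AP_functional P T \<longleftrightarrow>
     (\<forall>a b. T (a + b) = T a + T b) \<and>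
     (\<forall>c a. T (scal c a) = c * T a) \<and>
     (\<forall>a b r. r \<in> rels P \<longrightarrow> T (a * r * b) = 0)"

definition cnt :: "gen \<Rightarrow> gen list \<Rightarrow> int" where
  "cnt g w = int (length (filter (\<lambda>x. x = g) w))"

text \<open>Lift of the automorphism g_t (u \<mapsto> t^-1 u, v \<mapsto> t v, z \<mapsto> z) to the free algebra.\<close>
definition g_aut :: "complex \<Rightarrow> fa \<Rightarrow> fa" where
  "g_aut t p = (\<Sum>w\<in>Poly_Mapping.keys p.
       Poly_Mapping.single w (t powi (cnt V w - cnt U w) * Poly_Mapping.lookup p w))"

definition twisted_traces :: "complex poly \<Rightarrow> complex \<Rightarrow> (fa \<Rightarrow> complex) set" where
  "twisted_traces P t = {T. AP_functional P T \<and> (\<forall>a b. T (a * b) = T (g_aut t b * a))}"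

text \<open>Formal Stieltjes transform F_T(x) = sum T(z^n) x^(-n-1), as a formal
  Laurent series in the variable x (only negative powers of x occur).
  We use fls in the variable w = x^-1, so x corresponds to fls_X_inv.\<close>
definition stieltjes_fps :: "(fa \<Rightarrow> complex) \<Rightarrow> complex fps" where
  "stieltjes_fps T = Abs_fps (\<lambda>k. if k = 0 then 0 else T (gZ ^ (k - 1)))"

definition stieltjes :: "(fa \<Rightarrow> complex) \<Rightarrow> complex fls" where
  "stieltjes T = fps_to_fls (stieltjes_fps T)"

definition poly_at_inf :: "complex poly \<Rightarrow> complex fls" where
  "poly_at_inf p = (\<Sum>i\<le>Polynomial.degree p. fls_const (coeff p i) * fls_X_inv ^ i)"

definition is_rational_expansion_at_inf :: "complex fls \<Rightarrow> bool" where
  "is_rational_expansion_at_inf F \<longleftrightarrow>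
     (\<exists>p q. q \<noteq> 0 \<and> F = poly_at_inf p / poly_at_inf q)"

end

theory Submission imports Defs "HOL-Complex_Analysis.Complex_Analysis" begin

lemma list_zero_eq: "(0::'a list) = []" by (simp add: zero_list_def)
lemma list_plus_eq: "(xs::'a list) + ys = xs @ ys" by (simp add: plus_list_def)

lemma lookup_scal_left: "Poly_Mapping.lookup (Poly_Mapping.single [] (a::complex) * (x::fa)) k = a * Poly_Mapping.lookup x k"
  by (simp add: lookup_mult lookup_single list_plus_eq when_mult mult_when Sum_any_right_distrib flip: Sum_any_left_distrib)

lemma lookup_scal_right: "Poly_Mapping.lookup ((x::fa) * Poly_Mapping.single [] (a::complex)) k = a * Poly_Mapping.lookup x k"
proof -
  have "(\<Sum>ab. (c when [] = ab) when k = aa @ ab) = (c when k = aa)" for c :: complex and aa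
    by (subst when_commute) simp
  then show ?thesis
  by (simp add: lookup_mult lookup_single list_plus_eq when_mult mult_when Sum_any_right_distrib mult.commute)
qed

lemma scal_comm: "Poly_Mapping.single [] (a::complex) * (x::fa) = x * Poly_Mapping.single [] a"
  by (rule poly_mapping_eqI) (simp add: lookup_scal_left lookup_scal_right)


abbreviation C :: "complex \<Rightarrow> fa" where "C a \<equiv> Poly_Mapping.single [] a"

lemma C_one: "C 1 = 1" using single_one[where 'a="gen list" and 'b=complex] by (simp add: list_zero_eq)
lemma C_zero: "C 0 = 0" by simp
lemma C_add: "C (a+b) = C a + C b" by (simp add: single_add)
lemma C_mult: "C (a*b) = C a * C b" by (simp add: mult_single list_plus_eq)
lemma C_uminus: "C (-a) = - C a" by (simp add: single_uminus)
lemma scal_C: "scal c p = C c * p" by (simp add: scal_def)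

lemma poly_z_ext: assumes "degree q \<le> N" shows "poly_z q = (\<Sum>i\<le>N. C (coeff q i) * gZ ^ i)"
proof -
  have "(\<Sum>i\<le>N. C (coeff q i) * gZ ^ i) = (\<Sum>i\<le>degree q. C (coeff q i) * gZ ^ i)"
    by (rule sum.mono_neutral_right) (use assms in \<open>auto simp: coeff_eq_0\<close>)
  then show ?thesis by (simp add: poly_z_def scal_C)
qed

lemma poly_z_add: "poly_z (p + q) = poly_z p + poly_z q"
proof -
  let ?N = "max (degree p) (degree q)"
  have "degree (p+q) \<le> ?N" by (simp add: degree_add_le)
  then show ?thesis
    by (simp add: poly_z_ext[of _ ?N] C_add distrib_right sum.distrib)
qed

lemma poly_z_smult: "poly_z (smult a p) = C a * poly_z p"
  by (simp add: poly_z_ext[of _ "degree p"] C_mult sum_distrib_left mult.assoc)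

lemma poly_z_0: "poly_z 0 = 0" by (simp add: poly_z_def scal_C)

lemma poly_z_pCons: "poly_z (pCons a q) = C a + gZ * poly_z q"
proof -
  have "poly_z (pCons a q) = (\<Sum>i\<le>Suc (degree q). C (coeff (pCons a q) i) * gZ ^ i)"
    by (rule poly_z_ext) (simp add: degree_pCons_le)
  also have "\<dots> = C a + (\<Sum>i\<le>degree q. C (coeff q i) * gZ ^ Suc i)"
    by (subst sum.atMost_Suc_shift) simp
  also have "(\<Sum>i\<le>degree q. C (coeff q i) * gZ ^ Suc i) = gZ * poly_z q"
    unfolding poly_z_ext[of q "degree q", OF order_refl] sum_distrib_left
    by (rule sum.cong) (simp_all, metis mult.assoc scal_comm)
  finally show ?thesis .
qed

lemma poly_z_mult: "poly_z (p * q) = poly_z p * poly_z q"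
proof (induction p)
  case 0 then show ?case by (simp add: poly_z_0)
next
  case (pCons a p)
  show ?case
    by (simp add: poly_z_add poly_z_smult poly_z_pCons pCons.IH C_zero distrib_right mult.assoc)
qed

lemma poly_z_const: "poly_z [:a:] = C a" by (simp add: poly_z_pCons poly_z_0)


context
  fixes P :: "complex poly" and t :: complex and T :: "fa \<Rightarrow> complex"
  assumes TT: "T \<in> twisted_traces P t"
begin

lemma tt_add: "T (a + b) = T a + T b"
  using TT by (simp add: twisted_traces_def AP_functional_def)
lemma tt_scal: "T (C c * a) = c * T a"
  using TT by (simp add: twisted_traces_def AP_functional_def scal_C)
lemma tt_rel: "r \<in> rels P \<Longrightarrow> T (x * r * y) = 0"
  using TT by (simp add: twisted_traces_def AP_functional_def)
lemma tt_twist: "T (a * b) = T (g_aut t b * a)"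
  using TT by (simp add: twisted_traces_def)
lemma tt_zero: "T 0 = 0"
  using tt_add[of 0 0] by simp
lemma tt_diff: "T (a - b) = T a - T b"
  using tt_add[of "a - b" b] by simp
lemma tt_sum: "T (sum f A) = (\<Sum>i\<in>A. T (f i))"
  by (induction A rule: infinite_finite_induct) (simp_all add: tt_zero tt_add)

definition eqv :: "fa \<Rightarrow> fa \<Rightarrow> bool" where
  "eqv a b \<longleftrightarrow> (\<forall>x y. T (x * a * y) = T (x * b * y))"

lemma eqv_refl: "eqv a a" by (simp add: eqv_def)
lemma eqv_trans: "eqv a b \<Longrightarrow> eqv b c \<Longrightarrow> eqv a c" by (simp add: eqv_def)
lemma eqv_sym: "eqv a b \<Longrightarrow> eqv b a" by (simp add: eqv_def)
lemma eqv_mult_left: "eqv a b \<Longrightarrow> eqv (p * a) (p * b)"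
  unfolding eqv_def by (metis mult.assoc)
lemma eqv_mult_right: "eqv a b \<Longrightarrow> eqv (a * q) (b * q)"
  unfolding eqv_def by (metis mult.assoc)
lemma eqv_add: "eqv a b \<Longrightarrow> eqv c d \<Longrightarrow> eqv (a + c) (b + d)"
  unfolding eqv_def by (simp add: distrib_left distrib_right tt_add)
lemma eqv_relI: assumes "a - b \<in> rels P" shows "eqv a b"
  unfolding eqv_def
proof (intro allI)
  fix x y
  have "T (x * a * y) = T (x * (a - b) * y) + T (x * b * y)"
    by (simp add: algebra_simps flip: tt_add)
  then show "T (x * a * y) = T (x * b * y)" using tt_rel[OF assms] by simp
qed
lemma eqv_T: "eqv a b \<Longrightarrow> T a = T b"
  unfolding eqv_def by (metis mult_1_left mult_1_right)

lemma eqv_UZ: "eqv (gU * gZ) (gZ * gU - gU)"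
  by (rule eqv_sym, rule eqv_relI) (simp add: rels_def algebra_simps)

lemma poly_z_shift1: "poly_z [:-1, 1:] = gZ - 1"
  by (simp add: poly_z_pCons poly_z_0 C_uminus C_one)

lemma eqv_U_poly: "eqv (gU * poly_z R) (poly_z (pcompose R [:-1, 1:]) * gU)"
proof (induction R)
  case 0 then show ?case by (simp add: poly_z_0 eqv_refl)
next
  case (pCons a R)
  define Y where "Y = poly_z (pcompose R [:-1, 1:])"
  have e1: "gU * poly_z (pCons a R) = C a * gU + (gU * gZ) * poly_z R"
    by (simp add: poly_z_pCons distrib_left mult.assoc flip: scal_comm)
  have e2: "eqv ((gU * gZ) * poly_z R) ((gZ - 1) * (gU * poly_z R))"
    using eqv_mult_right[OF eqv_UZ, of "poly_z R"] by (simp add: algebra_simps)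
  have e3: "eqv ((gZ - 1) * (gU * poly_z R)) ((gZ - 1) * (Y * gU))"
    using eqv_mult_left[OF pCons.IH] Y_def by simp
  have e4: "poly_z (pcompose (pCons a R) [:-1, 1:]) * gU = C a * gU + (gZ - 1) * (Y * gU)"
    unfolding pcompose_pCons poly_z_add poly_z_const poly_z_mult poly_z_shift1 Y_def
    by (simp only: distrib_right mult.assoc)
  have "eqv (C a * gU + (gU * gZ) * poly_z R) (C a * gU + (gZ - 1) * (Y * gU))"
    by (rule eqv_add[OF eqv_refl eqv_trans[OF e2 e3]])
  then show ?case unfolding e1 e4 .
qed

lemma g_aut_V: "g_aut t gV = C t * gV"
  by (simp add: g_aut_def gV_def cnt_def mult_single list_plus_eq)

lemma main_rel:
  "T (poly_z (pcompose R [:-1, 1:] * pcompose P [:-1/2, 1:])) =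
   t * T (poly_z (pcompose P [:1/2, 1:] * R))"
proof -
  define X where "X = poly_z R"
  define Y where "Y = poly_z (pcompose R [:-1, 1:])"
  have "T (poly_z (pcompose R [:-1, 1:] * pcompose P [:-1/2, 1:])) = T (Y * (gU * gV))"
  proof -
    have "eqv (gU * gV) (poly_z (pcompose P [:-1/2, 1:]))"
      by (rule eqv_relI) (simp add: rels_def)
    from eqv_T[OF eqv_mult_left[OF this, of Y]] show ?thesis
      by (simp add: poly_z_mult Y_def)
  qed
  also have "\<dots> = T (gU * X * gV)"
  proof -
    have "T (1 * (gU * X) * gV) = T (1 * (Y * gU) * gV)"
      using eqv_U_poly[of R] unfolding eqv_def X_def Y_def by blast
    then show ?thesis by (simp add: mult.assoc)
  qed
  also have "\<dots> = T (g_aut t gV * (gU * X))"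
    by (rule tt_twist)
  also have "\<dots> = t * T (gV * gU * X)"
    by (simp add: g_aut_V mult.assoc tt_scal)
  also have "T (gV * gU * X) = T (poly_z (pcompose P [:1/2, 1:]) * X)"
  proof -
    have "eqv (gV * gU) (poly_z (pcompose P [:1/2, 1:]))"
      by (rule eqv_relI) (simp add: rels_def)
    from eqv_T[OF eqv_mult_right[OF this, of X]] show ?thesis
      by simp
  qed
  finally show ?thesis by (simp add: poly_z_mult X_def)
qed

end

definition peval :: "complex poly \<Rightarrow> complex fls \<Rightarrow> complex fls" where
  "peval p Y = poly (map_poly fls_const p) Y"

lemma peval_0 [simp]: "peval 0 Y = 0" by (simp add: peval_def)
lemma peval_pCons: "peval (pCons a p) Y = fls_const a + Y * peval p Y"
  by (simp add: peval_def map_poly_pCons)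
lemma peval_const: "peval [:a:] Y = fls_const a"
  by (simp add: peval_pCons)
lemma peval_add: "peval (p + q) Y = peval p Y + peval q Y"
  by (induction p q rule: poly_induct2) (simp_all add: peval_pCons algebra_simps fls_plus_const[symmetric])
lemma peval_smult: "peval (smult a p) Y = fls_const a * peval p Y"
  by (simp add: peval_def map_poly_smult)
lemma peval_mult: "peval (p * q) Y = peval p Y * peval q Y"
  by (induction p) (simp_all add: peval_add peval_smult peval_pCons algebra_simps)
lemma peval_pcompose: "peval (pcompose p q) Y = peval p (peval q Y)"
  by (induction p) (simp_all add: pcompose_pCons peval_add peval_mult peval_const peval_pCons)
lemma peval_power: "peval (p ^ n) Y = peval p Y ^ n"
  by (induction n) (simp_all add: peval_mult, simp add: peval_def)

lemma poly_at_inf_peval: "poly_at_inf p = peval p fls_X_inv"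
  unfolding poly_at_inf_def peval_def poly_altdef
  by (simp add: degree_map_poly coeff_map_poly)

lemma fls_compose_peval:
  assumes "H \<noteq> 0" "fps_nth H 0 = 0"
  shows "fls_compose_fps (peval p Y) H = peval p (fls_compose_fps Y H)"
proof (induction p)
  case 0 then show ?case by simp
next
  case (pCons a p) then show ?case
    by (simp add: peval_pCons fls_compose_fps_add fls_compose_fps_mult assms)
qed

lemma poly_at_inf_nth: "fls_nth (poly_at_inf q) n = (if n \<le> 0 then coeff q (nat (-n)) else 0)"
proof -
  have "fls_nth (poly_at_inf q) n = (\<Sum>i\<le>degree q. coeff q i * (if n = - int i then 1 else 0))"
    by (simp add: poly_at_inf_def fls_nth_sum)
  also have "\<dots> = (\<Sum>i\<in>{i. i \<le> degree q \<and> n = - int i}. coeff q i)"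
    by (simp add: sum.inter_filter[symmetric] if_distrib cong: if_cong)
  also have "\<dots> = (if n \<le> 0 then coeff q (nat (-n)) else 0)"
  proof (cases "n \<le> 0")
    case True
    show ?thesis
    proof (cases "nat (-n) \<le> degree q")
      case True
      then have "{i. i \<le> degree q \<and> n = - int i} = {nat (-n)}" using \<open>n \<le> 0\<close> by auto
      then show ?thesis using \<open>n \<le> 0\<close> by simp
    next
      case False
      then have "{i. i \<le> degree q \<and> n = - int i} = {}" using \<open>n \<le> 0\<close> by auto
      then show ?thesis using \<open>n \<le> 0\<close> False by (simp only:) (simp add: coeff_eq_0)
    qed
  next
    case False
    then have "{i. i \<le> degree q \<and> n = - int i} = {}" by auto
    then show ?thesis using False by simp
  qed
  finally show ?thesis .
qed


definition sig :: "complex \<Rightarrow> complex fps" where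
  "sig c = fps_X * inverse (1 + fps_const c * fps_X)"

lemma sig_nth0 [simp]: "fps_nth (sig c) 0 = 0"
  by (simp add: sig_def)
lemma sig_nth1: "fps_nth (sig c) 1 = 1" "fps_nth (sig c) (Suc 0) = 1"
  by (simp_all add: sig_def)
lemma sig_ne [simp]: "sig c \<noteq> 0"
  using sig_nth1(1)[of c] by auto

lemma fls_X_X_inv: "fls_X * fls_X_inv = (1 :: complex fls)"
  by (simp flip: fls_inverse_X)

lemma sig_to_fls: "fps_to_fls (sig c) * (fls_X_inv + fls_const c) = 1"
proof -
  have e: "fls_X_inv + fls_const c = fls_X_inv * fps_to_fls (1 + fps_const c * fps_X)"
  proof -
    have "fls_X_inv * fps_to_fls (1 + fps_const c * fps_X) = fls_X_inv + fls_const c * (fls_X * fls_X_inv)"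
      by (simp add: fls_times_fps_to_fls distrib_left mult.left_commute)
    then show ?thesis by (simp add: fls_X_X_inv)
  qed
  have "inverse (1 + fps_const c * fps_X) * (1 + fps_const c * fps_X) = 1"
    by (rule inverse_mult_eq_1) simp
  then have AB: "fps_to_fls (inverse (1 + fps_const c * fps_X)) * fps_to_fls (1 + fps_const c * fps_X) = 1"
    by (metis fls_times_fps_to_fls fps_one_to_fls)
  have gen: "(fls_X * A) * (fls_X_inv * B) = 1" if "A * B = 1" for A B :: "complex fls"
  proof -
    have "(fls_X * A) * (fls_X_inv * B) = (fls_X * fls_X_inv) * (A * B)"
      by (simp only: mult_ac)
    then show ?thesis using that by (simp add: fls_X_X_inv)
  qed
  show ?thesis unfolding e sig_def fls_times_fps_to_fls fps_X_to_fls
    by (rule gen[OF AB])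
qed

lemma compose_X_inv_sig: "fls_compose_fps fls_X_inv (sig c) = fls_X_inv + fls_const c"
proof -
  have "fls_compose_fps fls_X_inv (sig c) = inverse (fps_to_fls (sig c))"
    by (simp add: fls_compose_fps_inverse flip: fls_inverse_X)
  also have "\<dots> = fls_X_inv + fls_const c"
    by (rule inverse_unique[OF sig_to_fls])
  finally show ?thesis .
qed

lemma compose_poly_at_inf_sig:
  "fls_compose_fps (poly_at_inf p) (sig c) = peval p (fls_X_inv + fls_const c)"
  by (simp add: poly_at_inf_peval fls_compose_peval compose_X_inv_sig)


lemma peval_shift_X_inv: "peval [:c, 1:] fls_X_inv = fls_X_inv + fls_const c"
  by (simp add: peval_pCons peval_const)

lemma power_X_inv_const_nth: fixes c :: complex shows "m > 0 \<Longrightarrow> fls_nth ((fls_X_inv + fls_const c) ^ k) m = 0"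
proof -
  assume "m > 0"
  have "(fls_X_inv + fls_const c) ^ k = poly_at_inf ([:c, 1:] ^ k)"
    by (simp add: poly_at_inf_peval peval_power peval_shift_X_inv)
  then show ?thesis using \<open>m > 0\<close> by (simp add: poly_at_inf_nth)
qed

lemma subdegree_sig [simp]: "subdegree (sig c) = 1"
  by (rule subdegreeI) (auto simp: sig_nth1)

lemma compose_Xpow_sig_nth1:
  "fls_nth (fls_compose_fps (fls_shift (-j) 1) (sig c)) 1 = (if j = 1 then 1 else 0)" if "j \<le> 1"
proof -
  have e: "fls_compose_fps (fls_shift (-j) 1) (sig c) = fps_to_fls (sig c) powi j"
    by (simp add: fls_compose_fps_shift)
  show ?thesis
  proof (cases "j = 1")
    case True then show ?thesis unfolding e by (simp add: sig_nth1)
  next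
    case False
    then have j: "j \<le> 0" using that by simp
    have "fps_to_fls (sig c) powi j = inverse (fps_to_fls (sig c)) ^ nat (-j)"
    proof -
      have "j = - int (nat (-j))" using j by simp
      then have "fps_to_fls (sig c) powi j = fps_to_fls (sig c) powi (- int (nat (-j)))" by simp
      also have "\<dots> = inverse (fps_to_fls (sig c) ^ nat (-j))"
        by (simp only: power_int_minus power_int_of_nat)
      finally show ?thesis by (simp add: power_inverse)
    qed
    also have "inverse (fps_to_fls (sig c)) = fls_X_inv + fls_const c"
      by (rule inverse_unique[OF sig_to_fls])
    finally show ?thesis using False by (simp add: e power_X_inv_const_nth)
  qed
qed

lemma compose_sig_sum: "fls_compose_fps (sum f A) (sig c) = (\<Sum>i\<in>A. fls_compose_fps (f i) (sig c))"
  by (induction A rule: infinite_finite_induct) (simp_all add: fls_compose_fps_add)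

lemma compose_sig_high:
  assumes "\<And>n. n \<le> 1 \<Longrightarrow> fls_nth G n = 0"
  shows "fls_nth (fls_compose_fps G (sig c)) 1 = 0"
proof (cases "G = 0")
  case False
  have "2 \<le> fls_subdegree G"
    by (rule fls_subdegree_geI[OF False]) (use assms in auto)
  then have "1 < fls_subdegree (fls_compose_fps G (sig c))" by simp
  then show ?thesis by simp
qed simp

lemma residue_invariance: "fls_nth (fls_compose_fps H (sig c)) 1 = fls_nth H 1"
proof -
  define s where "s = fls_subdegree H"
  define Hlow where "Hlow = (\<Sum>j\<in>{s..1}. fls_const (fls_nth H j) * fls_shift (-j) 1)"
  have low_nth: "fls_nth Hlow n = (if s \<le> n \<and> n \<le> 1 then fls_nth H n else 0)" for n
  proof -
    have "fls_nth Hlow n = (\<Sum>j\<in>{s..1}. if j = n then fls_nth H j else 0)"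
      unfolding Hlow_def fls_nth_sum by (intro sum.cong) auto
    also have "\<dots> = (if s \<le> n \<and> n \<le> 1 then fls_nth H n else 0)"
      by (simp add: sum.delta')
    finally show ?thesis .
  qed
  have high: "fls_nth (H - Hlow) n = 0" if "n \<le> 1" for n
    using that by (cases "n < s") (simp_all add: low_nth s_def)
  have "fls_compose_fps H (sig c) = fls_compose_fps Hlow (sig c) + fls_compose_fps (H - Hlow) (sig c)"
    by (simp flip: fls_compose_fps_add)
  then have "fls_nth (fls_compose_fps H (sig c)) 1 = fls_nth (fls_compose_fps Hlow (sig c)) 1"
    using compose_sig_high[of "H - Hlow", OF high] by simp
  also have "\<dots> = (\<Sum>j\<in>{s..1}. if j = 1 then fls_nth H j else 0)"
    unfolding Hlow_def compose_sig_sum fls_nth_sum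
    by (intro sum.cong refl) (simp add: fls_compose_fps_mult compose_Xpow_sig_nth1)
  also have "\<dots> = fls_nth H 1"
    by (cases "s \<le> 1") (simp_all add: sum.delta' s_def)
  finally show ?thesis .
qed


context
  fixes P :: "complex poly" and t :: complex and T :: "fa \<Rightarrow> complex"
  assumes TT: "T \<in> twisted_traces P t"
begin

lemma pcompose_power_left': "pcompose (p ^ n) r = pcompose p r ^ n"
  for p r :: "'a::comm_semiring_1 poly"
  by (induction n) (simp_all add: pcompose_mult, metis pcompose_const pCons_one)

lemma L_sum: "T (poly_z q) = (\<Sum>i\<le>degree q. coeff q i * T (gZ ^ i))"
  unfolding poly_z_def by (simp add: tt_sum[OF TT] scal_C tt_scal[OF TT])

lemma stieltjes_nth: "fls_nth (stieltjes T) (1 + int i) = T (gZ ^ i)"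
proof -
  have "nat (1 + int i) = Suc i" by simp
  then show ?thesis by (simp add: stieltjes_def stieltjes_fps_def)
qed

lemma res_poly_stieltjes: "fls_nth (poly_at_inf q * stieltjes T) 1 = T (poly_z q)"
proof -
  have "fls_nth (poly_at_inf q * stieltjes T) 1 =
        (\<Sum>i\<le>degree q. coeff q i * fls_nth (fls_X_inv ^ i * stieltjes T) 1)"
    by (simp add: poly_at_inf_def sum_distrib_right fls_nth_sum mult.assoc)
  also have "\<dots> = (\<Sum>i\<le>degree q. coeff q i * T (gZ ^ i))"
    by (simp add: fls_X_inv_power_times_conv_shift stieltjes_nth)
  finally show ?thesis by (simp add: L_sum)
qed

lemma res_shift: "fls_nth (poly_at_inf G * fls_compose_fps (stieltjes T) (sig c)) 1 =
   T (poly_z (pcompose G [:-c, 1:]))"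
proof -
  define W where "W = poly_at_inf (pcompose G [:-c, 1:])"
  have "fls_compose_fps W (sig c) = peval G (peval [:-c, 1:] (fls_X_inv + fls_const c))"
    by (simp add: W_def compose_poly_at_inf_sig peval_pcompose)
  also have "peval [:-c, 1:] (fls_X_inv + fls_const c) = fls_X_inv"
    by (simp add: peval_pCons peval_const fls_plus_const[symmetric])
  finally have "fls_compose_fps W (sig c) = poly_at_inf G"
    by (simp add: poly_at_inf_peval)
  then have "poly_at_inf G * fls_compose_fps (stieltjes T) (sig c) = fls_compose_fps (W * stieltjes T) (sig c)"
    by (simp add: fls_compose_fps_mult)
  then show ?thesis
    by (simp add: residue_invariance res_poly_stieltjes W_def)
qed

lemma formal_FE:
  "fls_nth (poly_at_inf P * (fls_compose_fps (stieltjes T) (sig (1/2))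
      - fls_const t * fls_compose_fps (stieltjes T) (sig (-1/2)))) (1 + int k) = 0"
proof -
  define G where "G = [:0, 1:] ^ k * P"
  define H where "H = poly_at_inf P * (fls_compose_fps (stieltjes T) (sig (1/2))
      - fls_const t * fls_compose_fps (stieltjes T) (sig (-1/2)))"
  have "fls_nth H (1 + int k) = fls_nth (fls_X_inv ^ k * H) 1"
    by (simp add: fls_X_inv_power_times_conv_shift add.commute)
  also have "fls_X_inv ^ k * H = poly_at_inf G * fls_compose_fps (stieltjes T) (sig (1/2))
      - fls_const t * (poly_at_inf G * fls_compose_fps (stieltjes T) (sig (-1/2)))"
    by (simp add: H_def G_def poly_at_inf_peval peval_mult peval_power peval_pCons algebra_simps)
  also have "fls_nth \<dots> 1 = T (poly_z (pcompose G [:-(1/2), 1:])) - t * T (poly_z (pcompose G [:-(-1/2), 1:]))"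
    by (simp add: res_shift fls_minus_nth)
  also have "pcompose G [:-(1/2), 1:] = pcompose ([:1/2, 1:] ^ k) [:-1, 1:] * pcompose P [:-1/2, 1:]"
    by (simp add: G_def pcompose_mult pcompose_power_left' pcompose_pCons)
  also have "pcompose G [:-(-1/2), 1:] = pcompose P [:1/2, 1:] * [:1/2, 1:] ^ k"
    by (simp add: G_def pcompose_mult pcompose_power_left' pcompose_pCons mult.commute)
  finally show ?thesis
    using main_rel[OF TT, of "[:1/2, 1:] ^ k"] by (simp add: H_def)
qed

end


lemma poly_laurent: "(\<lambda>w. poly p (inverse w)) has_laurent_expansion poly_at_inf p"
  unfolding poly_altdef poly_at_inf_def
  by (intro laurent_expansion_intros)

lemma sig_fps: "(\<lambda>w. w * inverse (1 + c * w)) has_fps_expansion sig c"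
  unfolding sig_def by (intro fps_expansion_intros) simp

lemma sig_laurent: "(\<lambda>w. w * inverse (1 + c * w)) has_laurent_expansion fps_to_fls (sig c)"
  by (rule has_laurent_expansion_fps[OF sig_fps])

lemma exists_Q:
  assumes "\<And>n. n > 0 \<Longrightarrow> fls_nth H n = 0"
  shows "\<exists>Q. H = poly_at_inf Q"
proof -
  define N where "N = nat (- fls_subdegree H)"
  define Q where "Q = Poly (map (\<lambda>i. fls_nth H (- int i)) [0..<Suc N])"
  have cQ: "coeff Q i = (if i \<le> N then fls_nth H (- int i) else 0)" for i
    by (simp add: Q_def nth_default_def del: upt_Suc)
  have "H = poly_at_inf Q"
  proof (rule fls_eqI)
    fix n
    show "fls_nth H n = fls_nth (poly_at_inf Q) n"
    proof (cases "n \<le> 0")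
      case True
      show ?thesis
      proof (cases "nat (-n) \<le> N")
        case True then show ?thesis using \<open>n \<le> 0\<close> by (simp add: poly_at_inf_nth cQ)
      next
        case False
        then have "n < fls_subdegree H" using \<open>n \<le> 0\<close> by (simp add: N_def)
        then show ?thesis using False \<open>n \<le> 0\<close> by (simp add: poly_at_inf_nth cQ)
      qed
    next
      case False then show ?thesis using assms[of n] by (simp add: poly_at_inf_nth)
    qed
  qed
  then show ?thesis ..
qed


lemma sfun_inv: fixes x c :: complex assumes "x \<noteq> 0" "x + c \<noteq> 0"
  shows "inverse x * inverse (1 + c * inverse x) = inverse (x + c)"
  using assms by (simp add: field_simps)

lemma analytic_FE:
  assumes TT: "T \<in> twisted_traces P t" and rad: "fps_conv_radius (stieltjes_fps T) > 0"
  obtains Q K where "K > 0" "\<And>x. norm x > K \<Longrightarrow>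
     poly P x * (eval_fps (stieltjes_fps T) (inverse (x + 1/2))
        - t * eval_fps (stieltjes_fps T) (inverse (x - 1/2))) = poly Q x"
proof -
  define S where "S = stieltjes_fps T"
  define F where "F = stieltjes T"
  have F_def': "F = fps_to_fls S" by (simp add: F_def S_def stieltjes_def)
  define H where "H = poly_at_inf P * (fls_compose_fps F (sig (1/2))
      - fls_const t * fls_compose_fps F (sig (-1/2)))"
  have Hpos: "fls_nth H n = 0" if "n > 0" for n
  proof -
    have "n = 1 + int (nat (n - 1))" using that by simp
    then show ?thesis using formal_FE[OF TT, of "nat (n - 1)"] by (simp add: H_def F_def)
  qed
  obtain Q where HQ: "H = poly_at_inf Q" using exists_Q[OF Hpos] by blast
  define f0 where "f0 = eval_fps S"
  have f0L: "f0 has_laurent_expansion F"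
    unfolding F_def' f0_def
    by (rule has_laurent_expansion_fps[OF eval_fps_has_fps_expansion]) (use rad S_def in simp)
  have compL: "(f0 \<circ> (\<lambda>w. w * inverse (1 + c * w))) has_laurent_expansion fls_compose_fps F (sig c)" for c
    by (rule has_laurent_expansion_compose[OF f0L sig_laurent]) simp_all
  define hfun where "hfun = (\<lambda>w. poly P (inverse w) *
      ((f0 \<circ> (\<lambda>w. w * inverse (1 + (1/2) * w))) w - t * (f0 \<circ> (\<lambda>w. w * inverse (1 + (-1/2) * w))) w))"
  have hL: "hfun has_laurent_expansion H"
    unfolding hfun_def H_def
    by (intro has_laurent_expansion_mult poly_laurent has_laurent_expansion_diff
          has_laurent_expansion_cmult_left compL)
  have qL: "(\<lambda>w. poly Q (inverse w)) has_laurent_expansion H"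
    unfolding HQ by (rule poly_laurent)
  have "eventually (\<lambda>w. eval_fls H w = hfun w) (at 0)"
    using hL by (simp add: has_laurent_expansion_def)
  moreover have "eventually (\<lambda>w. eval_fls H w = poly Q (inverse w)) (at 0)"
    using qL by (simp add: has_laurent_expansion_def)
  ultimately have "eventually (\<lambda>w. hfun w = poly Q (inverse w)) (at (0::complex))"
    by eventually_elim simp
  then obtain d where d: "d > 0" "\<And>w. w \<noteq> 0 \<Longrightarrow> dist w 0 < d \<Longrightarrow> hfun w = poly Q (inverse w)"
    unfolding eventually_at by auto
  define K where "K = max 1 (1/d)"
  show ?thesis
  proof (rule that[of K Q])
    show "K > 0" by (simp add: K_def)
  next
    fix x :: complex assume x: "norm x > K"
    then have x1: "norm x > 1" and xd: "norm x > 1/d" by (auto simp: K_def)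
    have xnz: "x \<noteq> 0" using x1 by auto
    have c1: "x + 1/2 \<noteq> 0"
    proof
      assume "x + 1/2 = 0" then have "x = -1/2" by (simp add: eq_neg_iff_add_eq_0)
      with x1 show False by simp
    qed
    have c2: "x + (-1/2) \<noteq> 0"
    proof
      assume "x + (-1/2) = 0" then have "x = 1/2" by (simp add: eq_neg_iff_add_eq_0)
      with x1 show False by simp
    qed
    have nx: "norm x > 0" using xnz by simp
    have "1 / norm x < d" using xd d(1) nx by (simp add: field_simps)
    then have "dist (inverse x) 0 < d"
      by (simp add: norm_inverse divide_inverse)
    then have "hfun (inverse x) = poly Q x"
      using d(2)[of "inverse x"] xnz by simp
    moreover have "hfun (inverse x) = poly P x * (eval_fps S (inverse (x + 1/2))
        - t * eval_fps S (inverse (x - 1/2)))"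
      unfolding hfun_def f0_def o_def using sfun_inv[OF xnz c1] sfun_inv[OF xnz c2]
      by simp
    ultimately show "poly P x * (eval_fps (stieltjes_fps T) (inverse (x + 1/2))
        - t * eval_fps (stieltjes_fps T) (inverse (x - 1/2))) = poly Q x"
      by (simp add: S_def)
  qed
qed


lemma shift_ne0: "(A :: complex poly) \<noteq> 0 \<Longrightarrow> pcompose A [:c, 1:] \<noteq> 0"
  by (simp add: pcompose_eq_0_iff)

lemma chain:
  fixes f :: "complex \<Rightarrow> complex" and A B :: "complex poly"
  assumes t: "t \<noteq> 0" and A: "A \<noteq> 0"
    and fe: "\<And>z. norm z > K1 \<Longrightarrow> poly A z * f z = t * poly A z * f (z - 1) + poly B z"
  shows "\<exists>D a b. D \<noteq> 0 \<and> (\<forall>y. (\<forall>i\<in>{1..N}. norm (y + of_nat i) > K1) \<longrightarrow>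
            poly D y * f y = poly a y * f (y + of_nat N) + poly b y)"
proof (induction N)
  case 0
  show ?case by (rule exI[of _ 1], rule exI[of _ 1], rule exI[of _ 0]) simp
next
  case (Suc N)
  then obtain D a b where D: "D \<noteq> 0" and
    IH: "\<And>y. (\<forall>i\<in>{1..N}. norm (y + of_nat i) > K1) \<Longrightarrow> poly D y * f y = poly a y * f (y + of_nat N) + poly b y"
    by blast
  define A' where "A' = pcompose A [:of_nat (Suc N), 1:]"
  define B' where "B' = pcompose B [:of_nat (Suc N), 1:]"
  have pA': "poly A' y = poly A (y + of_nat (Suc N))" for y by (simp add: A'_def poly_pcompose add.commute)
  have pB': "poly B' y = poly B (y + of_nat (Suc N))" for y by (simp add: B'_def poly_pcompose add.commute)
  show ?case
  proof (intro exI conjI allI impI)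
    show "D * A' \<noteq> 0" using D shift_ne0[OF A] by (simp add: A'_def)
  next
    fix y :: complex assume yy: "\<forall>i\<in>{1..Suc N}. K1 < norm (y + of_nat i)"
    define z where "z = y + of_nat (Suc N)"
    have zK: "norm z > K1" using yy[rule_format, of "Suc N"] by (simp add: z_def del: of_nat_Suc)
    have z1: "z - 1 = y + of_nat N" by (simp add: z_def)
    have fez: "poly A z * f (y + of_nat N) = (poly A z * f z - poly B z) / t"
      using fe[OF zK] t unfolding z1 by (simp add: field_simps)
    have "poly (D * A') y * f y = poly A z * (poly D y * f y)"
      by (simp add: pA' z_def)
    also have "\<dots> = poly A z * (poly a y * f (y + of_nat N) + poly b y)"
      using IH yy by simp
    also have "\<dots> = poly a y * (poly A z * f (y + of_nat N)) + poly A z * poly b y"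
      by (simp add: algebra_simps)
    also have "\<dots> = poly (smult (1/t) (a * A')) y * f (y + of_nat (Suc N)) +
                    poly (A' * b - smult (1/t) (a * B')) y"
      unfolding fez by (simp add: pA' pB' z_def algebra_simps diff_divide_distrib)
    finally show "poly (D * A') y * f y = poly (smult (1/t) (a * A')) y * f (y + of_nat (Suc N)) +
                    poly (A' * b - smult (1/t) (a * B')) y" .
  qed
qed


lemma continuation:
  fixes f :: "complex \<Rightarrow> complex" and A B :: "complex poly" and K' K1 :: real
  assumes t: "t \<noteq> 0" and A: "A \<noteq> 0" and K: "0 \<le> K'" "K' \<le> K1"
    and holo: "f holomorphic_on {y. norm y > K'}"
    and fe: "\<And>z. norm z > K1 \<Longrightarrow> poly A z * f z = t * poly A z * f (z - 1) + poly B z"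
  shows "\<exists>D E. D \<noteq> 0 \<and> E holomorphic_on UNIV \<and> (\<forall>y. norm y > K' \<longrightarrow> E y = poly D y * f y)"
proof -
  define N where "N = nat \<lceil>2 * K1 + 3\<rceil>"
  have N: "real N \<ge> 2 * K1 + 3" unfolding N_def by linarith
  obtain D a b where D: "D \<noteq> 0" and
    ch: "\<And>y. (\<forall>i\<in>{1..N}. norm (y + of_nat i) > K1) \<Longrightarrow> poly D y * f y = poly a y * f (y + of_nat N) + poly b y"
    using chain[where N=N, OF t A fe] by blast
  define \<Phi> where "\<Phi> = (\<lambda>y. poly a y * f (y + of_nat N) + poly b y)"
  define \<Psi> where "\<Psi> = (\<lambda>y. poly D y * f y)"
  define U1 where "U1 = {y::complex. norm y > K'}"
  define U2 where "U2 = ball (0::complex) (real N - K')"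
  define Ann where "Ann = {y::complex. K' < norm (y - 0) \<and> norm (y - 0) < real N - K'}"
  have openU1: "open U1" unfolding U1_def by (simp add: open_Collect_less continuous_on_norm continuous_on_id continuous_on_const)
  have openU2: "open U2" unfolding U2_def by simp
  have AnnU: "Ann = U1 \<inter> U2" by (auto simp: Ann_def U1_def U2_def)
  have openAnn: "open Ann" using openU1 openU2 AnnU by auto
  have connAnn: "connected Ann" unfolding Ann_def by (rule connected_annulus) simp
  have holoPsi: "\<Psi> holomorphic_on U1"
    unfolding \<Psi>_def U1_def by (intro holomorphic_intros holo)
  have holoPhi: "\<Phi> holomorphic_on U2"
  proof -
    have "(f \<circ> (\<lambda>y. y + of_nat N)) holomorphic_on U2"
    proof (rule holomorphic_on_compose_gen[OF _ holo])
      show "(\<lambda>y. y + of_nat N) holomorphic_on U2" by (intro holomorphic_intros)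
      show "(\<lambda>y. y + of_nat N) ` U2 \<subseteq> {y. K' < norm y}"
      proof
        fix w assume "w \<in> (\<lambda>y. y + of_nat N) ` U2"
        then obtain y where y: "y \<in> U2" "w = y + of_nat N" by auto
        have "norm (of_nat N :: complex) \<le> norm (y + of_nat N) + norm y"
          using norm_triangle_ineq4[of "y + of_nat N" y] by simp
        then have "real N \<le> norm w + norm y" using y by (simp add: norm_of_nat)
        moreover have "norm y < real N - K'" using y by (simp add: U2_def)
        ultimately show "w \<in> {y. K' < norm y}" by simp
      qed
    qed
    then show ?thesis unfolding \<Phi>_def o_def by (intro holomorphic_intros)
  qed
  define V where "V = Ann \<inter> {y. Re y > K1}"
  have openV: "open V" unfolding V_def by (intro open_Int openAnn open_halfspace_Re_gt)
  have y0: "complex_of_real (K1 + 1) \<in> V"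
    using K N by (simp add: V_def Ann_def)
  have agree: "\<Psi> y = \<Phi> y" if "y \<in> V" for y
  proof -
    have "\<forall>i\<in>{1..N}. norm (y + of_nat i) > K1"
    proof
      fix i assume "i \<in> {1..N}"
      have "K1 < Re y" using that by (simp add: V_def)
      also have "\<dots> \<le> Re (y + of_nat i)" by simp
      also have "\<dots> \<le> norm (y + of_nat i)" by (rule complex_Re_le_cmod)
      finally show "norm (y + of_nat i) > K1" .
    qed
    then show ?thesis using ch unfolding \<Psi>_def \<Phi>_def by blast
  qed
  have agreeAnn: "\<Psi> y = \<Phi> y" if "y \<in> Ann" for y
    by (rule analytic_continuation_open[of V Ann \<Psi> \<Phi> y])
       (use openV y0 connAnn that agree holoPsi holoPhi AnnU openU1 openU2 in \<open>auto simp: V_def intro: holomorphic_on_subset\<close>)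
  define E where "E = (\<lambda>y. if norm y > K' then \<Psi> y else \<Phi> y)"
  have "E holomorphic_on U1"
    by (rule holomorphic_transform[OF holoPsi]) (simp add: E_def U1_def)
  moreover have "E holomorphic_on U2"
    by (rule holomorphic_transform[OF holoPhi]) (auto simp: E_def AnnU U1_def agreeAnn)
  ultimately have "E holomorphic_on (U1 \<union> U2)"
    by (rule holomorphic_on_Un[OF _ _ openU1 openU2])
  moreover have "U1 \<union> U2 = UNIV"
    using N K by (auto simp: U1_def U2_def)
  ultimately have "E holomorphic_on UNIV" by simp
  then show ?thesis
    using D by (intro exI[of _ D] exI[of _ E]) (simp add: E_def \<Psi>_def)
qed


lemma poly_growth:
  fixes p :: "complex poly" and z :: complex
  assumes "norm z \<ge> 1"
  shows "norm (poly p z) \<le> (\<Sum>i\<le>degree p. norm (coeff p i)) * norm z ^ degree p"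
proof -
  have "norm (poly p z) \<le> (\<Sum>i\<le>degree p. norm (coeff p i * z ^ i))"
    unfolding poly_altdef by (rule norm_sum)
  also have "\<dots> \<le> (\<Sum>i\<le>degree p. norm (coeff p i) * norm z ^ degree p)"
  proof (rule sum_mono)
    fix i assume "i \<in> {..degree p}"
    then have "norm z ^ i \<le> norm z ^ degree p" using assms by (intro power_increasing) auto
    then show "norm (coeff p i * z ^ i) \<le> norm (coeff p i) * norm z ^ degree p"
      by (simp add: norm_mult norm_power mult_left_mono)
  qed
  finally show ?thesis by (simp add: sum_distrib_right)
qed

lemma entire_poly:
  fixes E g :: "complex \<Rightarrow> complex" and D :: "complex poly"
  assumes holo: "E holomorphic_on UNIV"
    and eq: "\<And>y. norm y > R \<Longrightarrow> E y = poly D y * g y"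
    and bd: "\<And>y. norm y > R \<Longrightarrow> norm (g y) \<le> M"
  shows "\<exists>Ep. \<forall>\<xi>. E \<xi> = poly Ep \<xi>"
proof -
  define C where "C = (\<Sum>i\<le>degree D. norm (coeff D i))"
  have nof: "norm (E z) \<le> (C * max M 0) * norm z ^ degree D" if "max (R + 1) 1 \<le> norm z" for z
  proof -
    have z1: "norm z \<ge> 1" and zR: "norm z > R" using that by auto
    have "norm (E z) = norm (poly D z) * norm (g z)" using eq[OF zR] by (simp add: norm_mult)
    also have "\<dots> \<le> (C * norm z ^ degree D) * max M 0"
    proof (rule mult_mono)
      show "norm (poly D z) \<le> C * norm z ^ degree D" using poly_growth[OF z1, of D] by (simp add: C_def)
      show "norm (g z) \<le> max M 0" using bd[OF zR] by simp
      show "0 \<le> C * norm z ^ degree D" by (simp add: C_def sum_nonneg)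
    qed simp
    finally show ?thesis by (simp add: algebra_simps)
  qed
  define Ep where "Ep = (\<Sum>k\<le>degree D. monom ((deriv ^^ k) E 0 / fact k) k)"
  have "E \<xi> = poly Ep \<xi>" for \<xi>
    using Liouville_polynomial[where A="max (R+1) 1" and B="C * max M 0" and n="degree D", OF holo nof]
    by (simp add: Ep_def poly_sum poly_monom)
  then show ?thesis by blast
qed

lemma poly_at_inf_ne0: "D \<noteq> 0 \<Longrightarrow> poly_at_inf D \<noteq> 0"
proof
  assume "D \<noteq> 0" "poly_at_inf D = 0"
  then have "fls_nth (poly_at_inf D) (- int (degree D)) = 0" by simp
  then show False using \<open>D \<noteq> 0\<close> by (simp add: poly_at_inf_nth)
qed


theorem lemma6p1:
  fixes P :: "complex poly" and t :: complex and T :: "fa \<Rightarrow> complex"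
  assumes "Polynomial.degree P > 0" and "lead_coeff P = 1" and "t \<noteq> 0"
    and "T \<in> twisted_traces P t"
    and "\<not> is_rational_expansion_at_inf (stieltjes T)"
  shows "fps_conv_radius (stieltjes_fps T) = 0"
proof (rule ccontr)
  assume nz: "fps_conv_radius (stieltjes_fps T) \<noteq> 0"
  define S where "S = stieltjes_fps T"
  have rad: "fps_conv_radius S > 0"
    using nz conv_radius_nonneg[of "fps_nth S"] unfolding S_def fps_conv_radius_def by auto
  obtain Q K where K: "K > 0" and FE: "\<And>x. norm x > K \<Longrightarrow>
     poly P x * (eval_fps S (inverse (x + 1/2)) - t * eval_fps S (inverse (x - 1/2))) = poly Q x"
    using analytic_FE[OF assms(4)] rad unfolding S_def by metis
  obtain r0 where r0: "0 < ereal r0" "ereal r0 < fps_conv_radius S"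
    using ereal_dense2[OF rad] by blast
  have r0p: "r0 > 0" using r0(1) by simp
  have ball_sub: "ball (0::complex) r0 \<subseteq> eball 0 (fps_conv_radius S)"
    using r0(2) by (auto simp: eball_def less_le_trans[of _ "ereal r0"])
  define f where "f = (\<lambda>y. eval_fps S (inverse y))"
  have holo: "f holomorphic_on {y. norm y > 1/r0}"
  proof -
    have "(eval_fps S \<circ> inverse) holomorphic_on {y. norm y > 1/r0}"
    proof (rule holomorphic_on_compose_gen)
      show "inverse holomorphic_on {y::complex. norm y > 1/r0}"
        using r0p by (intro holomorphic_intros) (auto simp: field_simps)
      show "eval_fps S holomorphic_on ball 0 r0" by (rule holomorphic_on_eval_fps[OF ball_sub])
      show "inverse ` {y::complex. norm y > 1/r0} \<subseteq> ball 0 r0"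
      proof
        fix w assume "w \<in> inverse ` {y::complex. norm y > 1/r0}"
        then obtain y where y: "norm y > 1/r0" "w = inverse y" by auto
        moreover have "1/r0 > 0" using r0p by simp
        ultimately have "norm y > 0" by linarith
        then have "1 / norm y < r0" using y(1) r0p by (simp add: field_simps)
        then show "w \<in> ball 0 r0" using y by (simp add: norm_inverse divide_inverse)
      qed
    qed
    then show ?thesis by (simp add: f_def o_def)
  qed
  define A where "A = pcompose P [:-1/2, 1:]"
  define B where "B = pcompose Q [:-1/2, 1:]"
  define K1 where "K1 = max (1/r0) (K + 1)"
  have P0: "P \<noteq> 0" using assms(1) by auto
  have A0: "A \<noteq> 0" unfolding A_def using shift_ne0[OF P0] by simp
  have fe: "poly A z * f z = t * poly A z * f (z - 1) + poly B z" if z: "norm z > K1" for z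
  proof -
    define x where "x = z - 1/2"
    have "norm z \<le> norm x + norm (1/2 :: complex)"
      using norm_triangle_ineq[of x "1/2"] by (simp add: x_def)
    then have "norm x > K" using z by (simp add: K1_def)
    from FE[OF this] have "poly P x * (f z - t * f (z - 1)) = poly Q x"
      by (simp add: f_def x_def algebra_simps)
    moreover have "poly A z = poly P x" "poly B z = poly Q x"
      by (simp_all add: A_def B_def poly_pcompose x_def)
    ultimately show ?thesis by (simp add: algebra_simps)
  qed
  have "\<exists>D E. D \<noteq> 0 \<and> E holomorphic_on UNIV \<and> (\<forall>y. norm y > 1/r0 \<longrightarrow> E y = poly D y * f y)"
  proof (rule continuation[OF assms(3) A0 _ _ holo])
    show "0 \<le> 1/r0" using r0p by simp
    show "1/r0 \<le> K1" by (simp add: K1_def)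
    show "\<And>z. K1 < norm z \<Longrightarrow> poly A z * f z = t * poly A z * f (z - 1) + poly B z" by (rule fe)
  qed
  then obtain D E where D: "D \<noteq> 0" and holoE: "E holomorphic_on UNIV"
    and DE: "\<And>y. norm y > 1/r0 \<Longrightarrow> E y = poly D y * f y"
    by blast
  obtain M where M: "\<And>w. w \<in> cball 0 (r0/2) \<Longrightarrow> norm (eval_fps S w) \<le> M"
  proof -
    have "cball (0::complex) (r0/2) \<subseteq> eball 0 (fps_conv_radius S)"
    proof -
      have "cball 0 (r0/2) \<subseteq> ball (0::complex) r0" using r0p by (simp add: cball_subset_ball_iff)
      then show ?thesis using ball_sub by blast
    qed
    then have "continuous_on (cball 0 (r0/2)) (eval_fps S)"
      by (rule continuous_on_subset[OF continuous_on_eval_fps])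
    then have "compact (eval_fps S ` cball 0 (r0/2))"
      by (rule compact_continuous_image) simp
    then obtain M where "\<forall>x\<in>eval_fps S ` cball 0 (r0/2). norm x \<le> M"
      using compact_imp_bounded bounded_iff by metis
    then show ?thesis using that[of M] by blast
  qed
  have fbd: "norm (f y) \<le> M" if "norm y > 2/r0" for y
  proof -
    have "2/r0 > 0" using r0p by simp
    then have "norm y > 0" using that by linarith
    then have "1 / norm y < r0/2" using that r0p by (simp add: field_simps)
    moreover have "norm (inverse y) = 1 / norm y" by (simp add: inverse_eq_divide norm_divide)
    ultimately have "norm (inverse y) \<le> r0/2" by linarith
    then have "inverse y \<in> cball 0 (r0/2)" by (simp add: dist_norm)
    then show ?thesis using M by (simp add: f_def)
  qed
  have DE2: "E y = poly D y * f y" if "norm y > 2/r0" for y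
  proof -
    have "1/r0 < 2/r0" using r0p by (simp add: divide_strict_right_mono)
    then show ?thesis using DE[of y] that by linarith
  qed
  obtain Ep where Ep: "\<And>\<xi>. E \<xi> = poly Ep \<xi>"
    using entire_poly[OF holoE DE2 fbd] by blast
  have L1: "(\<lambda>w. poly D (inverse w) * eval_fps S w) has_laurent_expansion poly_at_inf D * stieltjes T"
    unfolding stieltjes_def S_def
    by (intro has_laurent_expansion_mult poly_laurent has_laurent_expansion_fps
          eval_fps_has_fps_expansion) (use rad S_def in simp)
  have evw: "poly D (inverse w) * eval_fps S w = poly Ep (inverse w)"
    if w0: "w \<noteq> 0" and wd: "dist w 0 < r0/2" for w :: complex
  proof -
    have "norm w > 0" "norm w < r0/2" using w0 wd by auto
    then have "2/r0 < 1 / norm w" using r0p by (simp add: field_simps)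
    moreover have "norm (inverse w) = 1 / norm w" by (simp add: inverse_eq_divide norm_divide)
    ultimately have "norm (inverse w) > 2/r0" by linarith
    then have "E (inverse w) = poly D (inverse w) * f (inverse w)" by (rule DE2)
    then show ?thesis using w0 by (simp add: Ep f_def)
  qed
  have ev: "eventually (\<lambda>w. poly D (inverse w) * eval_fps S w = poly Ep (inverse w)) (at 0)"
    unfolding eventually_at using r0p evw by (intro exI[of _ "r0/2"]) auto
  have L2: "(\<lambda>w. poly Ep (inverse w)) has_laurent_expansion poly_at_inf D * stieltjes T"
    using has_laurent_expansion_cong[OF ev refl] L1 by simp
  have eqL: "poly_at_inf D * stieltjes T = poly_at_inf Ep"
    using has_laurent_expansion_unique[OF L2 poly_laurent] .
  have "stieltjes T = poly_at_inf Ep / poly_at_inf D"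
    using eqL poly_at_inf_ne0[OF D] by (simp add: field_simps)
  then have "is_rational_expansion_at_inf (stieltjes T)"
    unfolding is_rational_expansion_at_inf_def using D by blast
  then show False using assms(5) by simp
qed

end
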